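(* Let $(N_0,c,w,P)$ be an RS-situation. Then there exist prices $w_i^*\in[c,p_i(q_i^c)]$, $i\in N$, such that for every $i\in N$ \[\Pi_i^{ret}(q_i^c;w_i^* )\ \ge\ \max_{S\subseteq N:\, i\in S}\Pi_i^{ret}(q_i^S;w(q_S^S)).\]
   Context: Let $c\in\mathbb{R}$. An RS-problem is a triple $(c,w,p)$ where $w:\mathbb{R}_+\to(c,+\infty)$ is decreasing (non-increasing) and continuous, and $p:\mathbb{R}_+\to\mathbb{R}$ is decreasing (non-increasing) and continuous, satisfies $p(0)>w(0)$, and there exists $q>0$ with $p(q)=c$. An RS-situation is a tuple $(N_0,c,w,P)$ where $N=\{1,\dots,n\}$ is the set of retailers, $0$ denotes the supplier, $N_0=N\cup\{0\}$, $P=(p_1,\dots,p_n)$, and $(c,w,p_i)$ is an RS-problem for each $i\in N$. For $q\ge0$ and $\omega\in\mathbb{R}$, $\Pi_i^{ret}(q;\omega)=(p_i(q)-\omega)q$. For nonempty $S\subseteq N$, $(q_i^S)_{i\in S}$ is a fixed optimal solution of: maximize $\sum_{i\in S}(p_i(q_i)-w(q_S))q_i$ over $q\in\mathbb{R}_+^{S}$ subject to $p_i(q_i)\ge w(q_S)$ for all $i\in S$, where $q_S=\sum_{i\in S}q_i$; $q_S^S=\sum_{i\in S}q_i^S$. For $i\in N$, $q_i^c$ is a fixed optimal solution of: maximize $(p_i(q)-c)q$ over $q\ge0$ subject to $p_i(q)\ge c$. *)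

theory Defs
  imports Complex_Main
begin

definition nonincr_on_nonneg :: "(real \<Rightarrow> real) \<Rightarrow> bool" where
  "nonincr_on_nonneg f \<longleftrightarrow> (\<forall>x y. 0 \<le> x \<longrightarrow> x \<le> y \<longrightarrow> f y \<le> f x)"

definition RS_problem :: "real \<Rightarrow> (real \<Rightarrow> real) \<Rightarrow> (real \<Rightarrow> real) \<Rightarrow> bool" where
  "RS_problem c w p \<longleftrightarrow>
     (\<forall>x\<ge>0. c < w x) \<and> nonincr_on_nonneg w \<and> continuous_on {0..} w \<and>
     nonincr_on_nonneg p \<and> continuous_on {0..} p \<and> p 0 > w 0 \<and>
     (\<exists>q>0. p q = c)"

definition RS_situation :: "nat \<Rightarrow> real \<Rightarrow> (real \<Rightarrow> real) \<Rightarrow> (nat \<Rightarrow> real \<Rightarrow> real) \<Rightarrow> bool" where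
  "RS_situation n c w P \<longleftrightarrow> (\<forall>i\<in>{1..n}. RS_problem c w (P i))"

definition Pi_ret :: "(real \<Rightarrow> real) \<Rightarrow> real \<Rightarrow> real \<Rightarrow> real" where
  "Pi_ret p q \<omega> = (p q - \<omega>) * q"

definition coal_feasible :: "(real \<Rightarrow> real) \<Rightarrow> (nat \<Rightarrow> real \<Rightarrow> real) \<Rightarrow> nat set \<Rightarrow> (nat \<Rightarrow> real) \<Rightarrow> bool" where
  "coal_feasible w P S q \<longleftrightarrow>
     (\<forall>i\<in>S. 0 \<le> q i) \<and> (\<forall>i\<in>S. P i (q i) \<ge> w (\<Sum>j\<in>S. q j))"

definition coal_obj :: "(real \<Rightarrow> real) \<Rightarrow> (nat \<Rightarrow> real \<Rightarrow> real) \<Rightarrow> nat set \<Rightarrow> (nat \<Rightarrow> real) \<Rightarrow> real" where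
  "coal_obj w P S q = (\<Sum>i\<in>S. (P i (q i) - w (\<Sum>j\<in>S. q j)) * q i)"

definition coal_optimal :: "(real \<Rightarrow> real) \<Rightarrow> (nat \<Rightarrow> real \<Rightarrow> real) \<Rightarrow> nat set \<Rightarrow> (nat \<Rightarrow> real) \<Rightarrow> bool" where
  "coal_optimal w P S q \<longleftrightarrow> coal_feasible w P S q \<and>
     (\<forall>q'. coal_feasible w P S q' \<longrightarrow> coal_obj w P S q' \<le> coal_obj w P S q)"

definition ind_optimal :: "real \<Rightarrow> (real \<Rightarrow> real) \<Rightarrow> real \<Rightarrow> bool" where
  "ind_optimal c p q \<longleftrightarrow> 0 \<le> q \<and> c \<le> p q \<and>
     (\<forall>q'. 0 \<le> q' \<longrightarrow> c \<le> p q' \<longrightarrow> (p q' - c) * q' \<le> (p q - c) * q)"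

end

theory Submission
  imports Defs
begin

theorem lemma5p4:
  fixes n :: nat and c :: real and w :: "real \<Rightarrow> real" and P :: "nat \<Rightarrow> real \<Rightarrow> real"
    and qS :: "nat set \<Rightarrow> nat \<Rightarrow> real" and qc :: "nat \<Rightarrow> real"
  assumes "RS_situation n c w P"
    and "\<And>S. S \<subseteq> {1..n} \<Longrightarrow> S \<noteq> {} \<Longrightarrow> coal_optimal w P S (qS S)"
    and "\<And>i. i \<in> {1..n} \<Longrightarrow> ind_optimal c (P i) (qc i)"
  shows "\<exists>wstar :: nat \<Rightarrow> real. \<forall>i\<in>{1..n}.
           wstar i \<in> {c..P i (qc i)} \<and>
           Pi_ret (P i) (qc i) (wstar i) \<ge>
             Max ((\<lambda>S. Pi_ret (P i) (qS S i) (w (\<Sum>j\<in>S. qS S j))) ` {S. S \<subseteq> {1..n} \<and> i \<in> S})"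
proof (intro exI[of _ "\<lambda>_. c"] ballI conjI)
  fix i assume i: "i \<in> {1..n}"
  have io: "ind_optimal c (P i) (qc i)" using assms(3) i by blast
  then show "c \<in> {c..P i (qc i)}" unfolding ind_optimal_def by simp
  have wpos: "\<forall>x\<ge>0. c < w x" using assms(1) i unfolding RS_situation_def RS_problem_def by blast
  have fin: "finite {S. S \<subseteq> {1..n} \<and> i \<in> S}" by (rule finite_subset[of _ "Pow {1..n}"]) auto
  have ne: "{S. S \<subseteq> {1..n} \<and> i \<in> S} \<noteq> {}" using i by auto
  have "Pi_ret (P i) (qS S i) (w (\<Sum>j\<in>S. qS S j)) \<le> Pi_ret (P i) (qc i) c"
    if S: "S \<subseteq> {1..n}" "i \<in> S" for S
  proof -
    have co: "coal_feasible w P S (qS S)" using assms(2)[OF S(1)] S(2) unfolding coal_optimal_def by blast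
    have q0: "0 \<le> qS S i" and pw: "P i (qS S i) \<ge> w (\<Sum>j\<in>S. qS S j)"
      using co S(2) unfolding coal_feasible_def by auto
    have s0: "0 \<le> (\<Sum>j\<in>S. qS S j)" using co unfolding coal_feasible_def by (simp add: sum_nonneg)
    have wc: "c < w (\<Sum>j\<in>S. qS S j)" using wpos s0 by blast
    have "(P i (qS S i) - c) * qS S i \<le> (P i (qc i) - c) * qc i"
      using io q0 pw wc unfolding ind_optimal_def by auto
    moreover have "(P i (qS S i) - w (\<Sum>j\<in>S. qS S j)) * qS S i \<le> (P i (qS S i) - c) * qS S i"
      using q0 wc by (intro mult_right_mono) auto
    ultimately show ?thesis unfolding Pi_ret_def by linarith
  qed
  then show "Pi_ret (P i) (qc i) c \<ge>
     Max ((\<lambda>S. Pi_ret (P i) (qS S i) (w (\<Sum>j\<in>S. qS S j))) ` {S. S \<subseteq> {1..n} \<and> i \<in> S})"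
    using fin ne by (subst Max_le_iff) auto
qed

end
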